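(* Let $p$ be an odd prime, $m$ a positive integer, $G$ a cyclic group of order $p^m$ (written additively), and $\mathcal A=\mathcal O(K,G)$ the orbit S-ring of a subgroup $K\le\mathrm{Aut}(G)$. If $p$ divides $|K|$, then $G^{(p^{m-1})}\le\mathrm{rad}(\mathcal A)$. In particular, $\mathcal A$ is not free.
   Context: An S-ring over a finite group $G$ is a subring $\mathcal A\subseteq\mathbb{Z}[G]$ with $\mathbb{Z}$-basis $\{\underline X:X\in\mathcal S\}$ for a partition $\mathcal S$ of $G$ (the basic sets) with $\{0\}\in\mathcal S$ and $X^{(-1)}\in\mathcal S$ for all $X\in\mathcal S$, where $\underline X=\sum_{x\in X}x$. For $K\le\mathrm{Aut}(G)$, $\mathcal O(K,G)$ is the S-ring whose basic sets are the $K$-orbits on $G$. For $X\subseteq G$ and an integer $m$, $X^{(m)}=\{mx:x\in X\}$. The radical of a set $X$ is $\mathrm{rad}(X)=\{g\in G:g+X=X\}$. For an S-ring $\mathcal A$ over a cyclic group $G$, $\mathrm{rad}(\mathcal A)$ is $\mathrm{rad}(X)$ for any basic set $X$ generating $G$ (this does not depend on the choice of $X$), and $\mathcal A$ is free if $\mathrm{rad}(\mathcal A)=\{0\}$. *)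

theory Defs
  imports "HOL-Algebra.Algebra"
begin

text \<open>Groups are written multiplicatively (HOL-Algebra); the paper writes G additively.
  Basic sets of the orbit S-ring O(K,G): the K-orbits on G.\<close>
definition orbit_basic_sets :: "('a \<Rightarrow> 'a) set \<Rightarrow> ('a, 'b) monoid_scheme \<Rightarrow> 'a set set" where
  "orbit_basic_sets KK GG = {(\<lambda>\<sigma>. \<sigma> y) ` KK | y. y \<in> carrier GG}"

text \<open>X^(m) = {m x : x in X}, multiplicatively {x^m : x in X}.\<close>
definition set_pow :: "('a, 'b) monoid_scheme \<Rightarrow> nat \<Rightarrow> 'a set \<Rightarrow> 'a set" where
  "set_pow GG e XX = (\<lambda>y. y [^]\<^bsub>GG\<^esub> e) ` XX"

definition set_rad :: "('a, 'b) monoid_scheme \<Rightarrow> 'a set \<Rightarrow> 'a set" where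
  "set_rad GG XX = {g \<in> carrier GG. g <#\<^bsub>GG\<^esub> XX = XX}"

end

theory Submission
  imports Defs "HOL-Number_Theory.Number_Theory"
begin

lemma pow_cong_sq:
  fixes p :: int and t :: int
  shows "[(1 + p*t)^i = 1 + int i*p*t] (mod p^2)"
proof (induction i)
  case 0 then show ?case by simp
next
  case (Suc i)
  have "(1 + p*t)^Suc i = (1+p*t) * (1+p*t)^i" by simp
  also have "[\<dots> = (1+p*t) * (1 + int i*p*t)] (mod p^2)"
    using Suc cong_mult cong_refl by blast
  also have "(1+p*t) * (1 + int i*p*t) = 1 + int (Suc i)*p*t + p^2 * (int i * t * t)"
    by (simp add: algebra_simps power2_eq_square)
  also have "[\<dots> = 1 + int (Suc i)*p*t + 0] (mod p^2)"
    by (intro cong_add cong_refl) (simp add: cong_0_iff)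
  finally show ?case by simp
qed

lemma nt_int:
  fixes p :: nat and A :: int
  assumes "Factorial_Ring.prime p" "odd p" "m > 0" "int p dvd A - 1" "int p ^ m dvd A ^ p - 1"
  shows "int p ^ (m - 1) dvd A - 1"
proof -
  obtain t where t: "A = 1 + int p * t" using assms(4) by (metis add.commute diff_add_cancel dvdE)
  define S where "S = (\<Sum>i<p. A^i)"
  have fact1: "A ^ p - 1 = (A - 1) * S" unfolding S_def by (rule power_diff_1_eq)
  have "[S = (\<Sum>i<p. 1 + int i * int p * t)] (mod (int p)^2)"
    unfolding S_def t by (intro cong_sum pow_cong_sq)
  moreover have "(\<Sum>i<p. 1 + int i * int p * t) = int p + int p * t * (\<Sum>i<p. int i)"
    by (simp add: sum.distrib sum_distrib_left sum_distrib_right algebra_simps)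
  moreover have "int p dvd (\<Sum>i<p. int i)"
  proof -
    have "2 * (\<Sum>i<p. int i) = int p * (int p - 1)"
    proof -
      obtain q where q: "p = Suc q" using assms(1) by (cases p) auto
      have "(\<Sum>i<p. int i) = (\<Sum>i = 0..q. int i)" using q
        by (simp add: lessThan_Suc_atMost atLeast0AtMost)
      then show ?thesis using double_gauss_sum[of q, where 'a=int] q by simp
    qed
    then have "int p dvd 2 * (\<Sum>i<p. int i)" by simp
    moreover have "coprime (int p) 2" using assms(1,2)
      by (simp add: coprime_right_2_iff_odd)
    ultimately show ?thesis using coprime_dvd_mult_right_iff by blast
  qed
  then obtain w where w: "(\<Sum>i<p. int i) = int p * w" by blast
  ultimately have "[S = int p + (int p)^2 * (t * w)] (mod (int p)^2)"
    by (simp add: power2_eq_square algebra_simps)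
  also have "[int p + (int p)^2 * (t * w) = int p + 0] (mod (int p)^2)"
    by (intro cong_add cong_refl) (simp add: cong_0_iff)
  finally have "[S = int p] (mod (int p)^2)" by simp
  then have "(int p)^2 dvd S - int p" by (simp add: cong_iff_dvd_diff)
  then obtain z where "S - int p = (int p)^2 * z" by (rule dvdE)
  then have z: "S = int p + (int p)^2 * z" by simp
  then have Sz: "S = int p * (1 + int p * z)" by (simp add: power2_eq_square algebra_simps)
  have c0: "coprime (int p * z) (int p * z + 1)" by (rule coprime_add_one_right)
  then have "coprime (int p) (int p * z + 1)" using coprime_mult_left_iff[of "int p" z "int p * z + 1"] by blast
  then have cop: "coprime (int p ^ (m-1)) (1 + int p * z)" by (simp add: add.commute)
  have e: "int p ^ (m - 1) * int p = int p ^ m" by (rule power_minus_mult[OF assms(3)])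
  have "(A - 1) * (1 + int p * z) * int p = A^p - 1" using fact1 Sz by (simp add: algebra_simps)
  then have "int p ^ (m - 1) * int p dvd (A - 1) * (1 + int p * z) * int p"
    using assms(5) e by simp
  then have "int p ^ (m - 1) dvd (A - 1) * (1 + int p * z)"
    using assms(1) by (simp add: prime_gt_0_nat)
  then show ?thesis using cop coprime_dvd_mult_left_iff by blast
qed
lemma nt2:
  fixes p m a :: nat
  assumes pr: "Factorial_Ring.prime p" and od: "odd p" and m: "m > 0"
    and h1: "int p ^ m dvd int (a ^ p) - 1" and h2: "\<not> int p ^ m dvd int a - 1"
  shows "m \<ge> 2 \<and> (\<forall>c. \<exists>k. (a ^ k) mod p ^ m = (1 + p ^ (m - 1) * c) mod p ^ m)"
proof -
  have p1: "int p dvd int (a ^ p) - 1" using h1 m by (meson dvd_power dvd_trans)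
  have np: "\<not> p dvd a"
  proof
    assume "p dvd a"
    then have "p ^ p dvd a ^ p" by (rule dvd_power_same)
    moreover have "p dvd p ^ p" using pr by (simp add: prime_gt_0_nat dvd_power)
    ultimately have "p dvd a ^ p" by (rule dvd_trans[rotated])
    then have "int p dvd int (a ^ p)" by (simp only: int_dvd_int_iff)
    then have "int p dvd int (a ^ p) - (int (a ^ p) - 1)" using p1 by (rule dvd_diff)
    then have "int p dvd 1" by simp
    then have "p = 1" by simp
    then show False using pr by simp
  qed
  have "[a ^ (p - 1) = 1] (mod p)" using fermat_theorem[OF pr np] .
  then have "[a ^ (p - 1) * a = 1 * a] (mod p)" by (intro cong_mult cong_refl)
  moreover have "a ^ (p - 1) * a = a ^ p" using pr
    by (metis power_minus_mult prime_gt_0_nat)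
  ultimately have "[a ^ p = a] (mod p)" by simp
  then have "int p dvd int (a ^ p) - int a"
    by (metis cong_int_iff cong_iff_dvd_diff of_nat_power)
  with p1 have "int p dvd (int (a^p) - 1) - (int (a^p) - int a)" by (rule dvd_diff)
  then have pa: "int p dvd int a - 1" by simp
  have "int p ^ m dvd (int a) ^ p - 1" using h1 by simp
  from nt_int[OF pr od m pa this] obtain u where u: "int a - 1 = int p ^ (m - 1) * u"
    by blast
  have m2: "m \<ge> 2"
  proof (rule ccontr)
    assume "\<not> m \<ge> 2" then have "m = 1" using m by simp
    then show False using h2 pa by simp
  qed
  have nu: "\<not> int p dvd u"
  proof
    assume "int p dvd u"
    then have "int p ^ (m - 1) * int p dvd int a - 1" using u by simp
    moreover have "int p ^ (m - 1) * int p = int p ^ m" by (rule power_minus_mult[OF m])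
    ultimately show False using h2 by simp
  qed
  have powk: "[int a ^ k = 1 + int k * (int a - 1)] (mod int p ^ m)" for k
  proof (induction k)
    case 0 then show ?case by simp
  next
    case (Suc k)
    have "int a ^ Suc k = int a * int a ^ k" by simp
    also have "[\<dots> = int a * (1 + int k * (int a - 1))] (mod int p ^ m)"
      using Suc cong_mult cong_refl by blast
    also have "int a * (1 + int k * (int a - 1)) = 1 + int (Suc k) * (int a - 1) + int k * (int a - 1)^2"
      by (simp add: algebra_simps power2_eq_square)
    also have "[\<dots> = 1 + int (Suc k) * (int a - 1) + 0] (mod int p ^ m)"
    proof (intro cong_add cong_refl)
      have "(int a - 1)^2 = (int p ^ (m-1))^2 * u^2" using u by (simp add: power_mult_distrib)
      moreover have "(int p ^ (m-1))^2 = int p ^ (2*(m-1))"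
        using power_mult[of "int p" "m-1" 2] by (simp add: mult.commute)
      ultimately have "(int a - 1)^2 = int p ^ (2*(m-1)) * u^2" by simp
      moreover have "int p ^ m dvd int p ^ (2*(m-1))" using m2 by (intro le_imp_power_dvd) simp
      ultimately show "[int k * (int a - 1)^2 = 0] (mod int p ^ m)"
        by (simp add: cong_0_iff)
    qed
    finally show ?case by simp
  qed
  have cop: "coprime u (int p)"
  proof -
    have "Factorial_Ring.prime (int p)" using pr by simp
    then have "coprime (int p) u" using nu by (rule prime_imp_coprime)
    then show ?thesis by (simp add: coprime_commute)
  qed
  obtain s where s: "[u * s = 1] (mod int p)" using cong_solve_coprime_int[OF cop] by blast
  show ?thesis
  proof (intro conjI allI m2)
    fix c :: nat
    define k where "k = nat (s mod int p) * c"
    have ik: "int k = (s mod int p) * int c"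
      unfolding k_def using pr by (simp add: prime_gt_0_nat)
    have "int k * u = (s mod int p) * u * int c" by (simp add: ik algebra_simps)
    also have "[(s mod int p) * u * int c = s * u * int c] (mod int p)"
      by (intro cong_mult cong_refl) (simp add: cong_def)
    also have "[s * u * int c = 1 * int c] (mod int p)"
      using s by (intro cong_mult cong_refl) (simp add: mult.commute)
    finally have "int p dvd int k * u - int c" by (simp add: cong_iff_dvd_diff)
    then obtain w where "int k * u - int c = int p * w" by (rule dvdE)
    then have w: "int k * u = int c + int p * w" by simp
    have "[int a ^ k = 1 + int k * (int a - 1)] (mod int p ^ m)" by (rule powk)
    also have "1 + int k * (int a - 1) = 1 + int p ^ (m - 1) * int c + int p ^ m * w"
    proof -
      have "int k * (int a - 1) = int p^(m-1) * (int k * u)" using u by (simp add: algebra_simps)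
      also have "\<dots> = int p^(m-1) * int c + (int p^(m-1) * int p) * w" using w by (simp add: algebra_simps)
      also have "int p^(m-1) * int p = int p^m" by (rule power_minus_mult[OF m])
      finally show ?thesis by (simp add: algebra_simps)
    qed
    also have "[\<dots> = 1 + int p ^ (m - 1) * int c + 0] (mod int p ^ m)"
      by (intro cong_add cong_refl) (simp add: cong_0_iff)
    finally have "[int (a ^ k) = int (1 + p ^ (m - 1) * c)] (mod int (p ^ m))" by simp
    then show "\<exists>k. (a ^ k) mod p ^ m = (1 + p ^ (m - 1) * c) mod p ^ m"
      by (subst (asm) cong_int_iff) (auto simp: cong_def)
  qed
qed

lemma pow_mod_order:
  fixes G :: "('a, 'b) monoid_scheme" (structure)
  assumes "group G" "x \<in> carrier G"
  shows "x [^]\<^bsub>G\<^esub> (n::nat) = x [^]\<^bsub>G\<^esub> (n mod order G)"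
proof -
  interpret group G by fact
  define q where "q = n div order G"
  define r where "r = n mod order G"
  have n: "n = order G * q + r" unfolding q_def r_def by simp
  have "x [^] n = x [^] (order G * q) \<otimes> x [^] r"
    unfolding n by (rule nat_pow_mult[symmetric, OF assms(2)])
  moreover have "x [^] (order G * q) = (x [^] order G) [^] q"
    by (rule nat_pow_pow[symmetric, OF assms(2)])
  moreover have "(x [^] order G) [^] q = \<one>" using assms(2) by (simp add: pow_order_eq_1)
  ultimately show ?thesis using assms(2) unfolding r_def by simp
qed

lemma auto_pow_rep:
  fixes G :: "('a, 'b) monoid_scheme" (structure)
  assumes "group G" "y \<in> carrier G" "\<forall>x\<in>carrier G. \<exists>k::nat. x = y [^]\<^bsub>G\<^esub> k" "\<tau> \<in> hom G G"
  shows "\<exists>r::nat. \<forall>x\<in>carrier G. \<tau> x = x [^]\<^bsub>G\<^esub> r"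
proof -
  interpret group G by fact
  have "\<tau> y \<in> carrier G" by (rule hom_in_carrier[OF assms(4) assms(2)])
  then obtain r :: nat where r: "\<tau> y = y [^] r" using assms(3) by blast
  show ?thesis
  proof (intro exI ballI)
    fix x assume x: "x \<in> carrier G"
    then obtain k :: nat where k: "x = y [^] k" using assms(3) by blast
    have "\<tau> x = (\<tau> y) [^] k" using hom_nat_pow[OF assms(4) assms(2) assms(1) assms(1)] k by simp
    also have "\<dots> = y [^] (r*k)" using r assms(2) by (simp add: nat_pow_pow)
    also have "\<dots> = x [^] r" using k assms(2) by (simp add: nat_pow_pow mult.commute)
    finally show "\<tau> x = x [^] r" .
  qed
qed

lemma gen_image:
  fixes G :: "('a, 'b) monoid_scheme" (structure)
  assumes "group G" "y \<in> carrier G" "\<forall>x\<in>carrier G. \<exists>k::nat. x = y [^]\<^bsub>G\<^esub> k" "\<tau> \<in> auto G"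
  shows "\<forall>x\<in>carrier G. \<exists>k::nat. x = (\<tau> y) [^]\<^bsub>G\<^esub> k"
proof
  interpret group G by fact
  fix x assume x: "x \<in> carrier G"
  have h: "\<tau> \<in> hom G G" and b: "bij_betw \<tau> (carrier G) (carrier G)"
    using assms(4) by (auto simp: auto_def Bij_def)
  then have "\<tau> ` carrier G = carrier G" by (simp add: bij_betw_def)
  then obtain x' where x': "x' \<in> carrier G" "x = \<tau> x'" using x by blast
  then obtain k :: nat where k: "x' = y [^] k" using assms(3) by blast
  have "x = (\<tau> y) [^] k" using x' k hom_nat_pow[OF h assms(2) assms(1) assms(1)] by simp
  then show "\<exists>k::nat. x = (\<tau> y) [^] k" by blast
qed

lemma subgroup_pow_closed:
  assumes "subgroup K A" "\<sigma> \<in> K"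
  shows "\<sigma> [^]\<^bsub>A\<^esub> (k::nat) \<in> K"
proof (induction k)
  case 0 then show ?case using subgroup.one_closed[OF assms(1)] by simp
next
  case (Suc k) then show ?case using subgroup.m_closed[OF assms(1) Suc assms(2)] by simp
qed

theorem lemma4p7:
  fixes G :: "('a, 'b) monoid_scheme" and K :: "('a \<Rightarrow> 'a) set" and p m :: nat
  assumes "Factorial_Ring.prime p" and "odd p" and "m > 0"
    and "group G" and "cyclic_group G" and "finite (carrier G)" and "order G = p ^ m"
    and "subgroup K (AutoGroup G)"
    and "p dvd card K"
  shows "\<forall>B \<in> orbit_basic_sets K G. generate G B = carrier G \<longrightarrow>
           (set_pow G (p ^ (m - 1)) (carrier G) \<subseteq> set_rad G B \<and> set_rad G B \<noteq> {\<one>\<^bsub>G\<^esub>})"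
proof (intro ballI impI)
  fix B assume Bb: "B \<in> orbit_basic_sets K G" and gB: "generate G B = carrier G"
  interpret G: group G by fact
  define A where "A = AutoGroup G"
  define e where "e = p ^ (m - 1)"
  define N where "N = p ^ m"
  interpret A: group A unfolding A_def by (rule G.AutoGroup)
  have cA: "carrier A = auto G" unfolding A_def by (simp add: AutoGroup_def)
  have mA: "\<And>f g. f \<in> auto G \<Longrightarrow> g \<in> auto G \<Longrightarrow> f \<otimes>\<^bsub>A\<^esub> g = compose (carrier G) f g"
    unfolding A_def by (simp add: AutoGroup_def BijGroup_def auto_def)
  have oA: "\<one>\<^bsub>A\<^esub> = (\<lambda>x\<in>carrier G. x)" unfolding A_def by (simp add: AutoGroup_def BijGroup_def)
  have sK: "subgroup K A" using assms(8) A_def by simp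
  have KA: "K \<subseteq> auto G" using subgroup.subset[OF sK] cA by simp
  have autoH: "\<And>f. f \<in> auto G \<Longrightarrow> f \<in> hom G G" by (auto simp: auto_def)
  have autoE: "\<And>f. f \<in> auto G \<Longrightarrow> f \<in> extensional (carrier G)" by (auto simp: auto_def Bij_def)
  have finK: "finite K"
  proof -
    have "auto G \<subseteq> (carrier G \<rightarrow>\<^sub>E carrier G)"
    proof
      fix f assume "f \<in> auto G"
      then have "f \<in> Bij (carrier G)" by (simp add: auto_def)
      then show "f \<in> carrier G \<rightarrow>\<^sub>E carrier G"
        by (simp add: PiE_def Bij_imp_funcset Bij_imp_extensional)
    qed
    moreover have "finite (carrier G \<rightarrow>\<^sub>E carrier G)" using assms(6) by (intro finite_PiE) auto
    ultimately have "finite (auto G)" by (rule finite_subset)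
    with KA show ?thesis by (rule finite_subset)
  qed
  obtain q where q: "card K = p * q" using assms(9) by blast
  have gK: "group (A\<lparr>carrier := K\<rparr>)" using subgroup.subgroup_is_group[OF sK A.is_group] .
  have "order (A\<lparr>carrier := K\<rparr>) = p ^ 1 * q" by (simp add: order_def q)
  from sylow_thm[OF assms(1) gK this] finK obtain H where
    sH: "subgroup H (A\<lparr>carrier := K\<rparr>)" and cH: "card H = p ^ 1" by auto
  have HK: "H \<subseteq> K" using subgroup.subset[OF sH] by simp
  have gH: "group (A\<lparr>carrier := H\<rparr>)" using subgroup.subgroup_is_group[OF sH gK] by simp
  have "\<exists>\<sigma>\<in>H. \<sigma> \<noteq> \<one>\<^bsub>A\<^esub>"
  proof (rule ccontr)
    assume "\<not> ?thesis"
    then have "H \<subseteq> {\<one>\<^bsub>A\<^esub>}" by blast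
    then have "card H \<le> card {\<one>\<^bsub>A\<^esub>}" by (intro card_mono) auto
    then have "card H \<le> 1" by simp
    then show False using cH prime_ge_2_nat[OF assms(1)] by simp
  qed
  then obtain \<sigma> where \<sigma>H: "\<sigma> \<in> H" and \<sigma>1: "\<sigma> \<noteq> \<one>\<^bsub>A\<^esub>" by blast
  have \<sigma>K: "\<sigma> \<in> K" using \<sigma>H HK by blast
  have \<sigma>A: "\<sigma> \<in> auto G" using \<sigma>K KA by blast
  have "\<sigma> [^]\<^bsub>A\<lparr>carrier := H\<rparr>\<^esub> order (A\<lparr>carrier := H\<rparr>) = \<one>\<^bsub>A\<lparr>carrier := H\<rparr>\<^esub>"
    using group.pow_order_eq_1[OF gH] \<sigma>H by simp
  then have \<sigma>p: "\<sigma> [^]\<^bsub>A\<^esub> p = \<one>\<^bsub>A\<^esub>"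
    using A.nat_pow_consistent[of \<sigma> p H] cH by (simp add: order_def)
  obtain y0 where y0: "y0 \<in> carrier G" "subgroup_generated G {y0} = G"
    using assms(5) unfolding cyclic_group_def by blast
  have "carrier G = generate G {y0}"
    using arg_cong[OF y0(2), of carrier] y0(1) by (simp add: carrier_subgroup_generated)
  then have gen0: "\<forall>x\<in>carrier G. \<exists>k::nat. x = y0 [^]\<^bsub>G\<^esub> k"
    using G.generate_pow_on_finite_carrier[OF assms(6) y0(1)] by auto
  have rep: "\<And>\<tau>. \<tau> \<in> auto G \<Longrightarrow> \<exists>r::nat. \<forall>x\<in>carrier G. \<tau> x = x [^]\<^bsub>G\<^esub> r"
    using auto_pow_rep[OF assms(4) y0(1) gen0] autoH by blast
  obtain y where y: "y \<in> carrier G" "B = (\<lambda>\<tau>. \<tau> y) ` K"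
    using Bb unfolding orbit_basic_sets_def by blast
  have Bc: "B \<subseteq> carrier G"
  proof
    fix b assume "b \<in> B"
    then obtain \<tau> where "\<tau> \<in> K" "b = \<tau> y" using y by blast
    then show "b \<in> carrier G" using hom_in_carrier[OF autoH[of \<tau>] y(1)] KA by blast
  qed
  have genpy: "generate G {y} = {y [^]\<^bsub>G\<^esub> k | k. k \<in> (UNIV :: nat set)}"
    using G.generate_pow_on_finite_carrier[OF assms(6) y(1)] .
  have "B \<subseteq> generate G {y}"
  proof
    fix b assume "b \<in> B"
    then obtain \<tau> where \<tau>: "\<tau> \<in> K" "b = \<tau> y" using y by blast
    obtain r :: nat where "\<forall>x\<in>carrier G. \<tau> x = x [^]\<^bsub>G\<^esub> r" using rep \<tau>(1) KA by blast
    then have "b = y [^]\<^bsub>G\<^esub> r" using \<tau> y by simp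
    then show "b \<in> generate G {y}" using genpy by blast
  qed
  then have "generate G B \<subseteq> generate G {y}"
    using G.generate_subgroup_incl G.generate_is_subgroup y(1) by blast
  then have cy: "carrier G \<subseteq> generate G {y}" using gB by simp
  then have geny: "\<forall>x\<in>carrier G. \<exists>k::nat. x = y [^]\<^bsub>G\<^esub> k" using genpy by auto
  have "generate G {y} = carrier G" using cy G.generate_incl y(1) by blast
  then have ordy: "G.ord y = N"
    using G.generate_pow_card[OF y(1)] assms(7) N_def by (simp add: order_def)
  obtain a :: nat where a: "\<forall>x\<in>carrier G. \<sigma> x = x [^]\<^bsub>G\<^esub> a" using rep \<sigma>A by blast
  have \<sigma>pow: "\<forall>x\<in>carrier G. (\<sigma> [^]\<^bsub>A\<^esub> k) x = x [^]\<^bsub>G\<^esub> (a ^ k)" for k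
  proof (induction k)
    case 0 then show ?case using oA by simp
  next
    case (Suc k)
    have cl: "\<sigma> [^]\<^bsub>A\<^esub> k \<in> auto G" using A.nat_pow_closed \<sigma>A cA by blast
    show ?case
    proof
      fix x assume x: "x \<in> carrier G"
      have "(\<sigma> [^]\<^bsub>A\<^esub> Suc k) x = (\<sigma> [^]\<^bsub>A\<^esub> k) (\<sigma> x)"
        using mA[OF cl \<sigma>A] x by (simp add: compose_def)
      also have "\<dots> = (x [^]\<^bsub>G\<^esub> a) [^]\<^bsub>G\<^esub> (a ^ k)" using Suc a x by simp
      also have "\<dots> = x [^]\<^bsub>G\<^esub> (a ^ Suc k)" using x by (simp add: G.nat_pow_pow)
      finally show "(\<sigma> [^]\<^bsub>A\<^esub> Suc k) x = x [^]\<^bsub>G\<^esub> (a ^ Suc k)" .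
    qed
  qed
  have "y [^]\<^bsub>G\<^esub> (a ^ p) = y" using \<sigma>pow[of p] \<sigma>p oA y(1) by simp
  then have "y [^]\<^bsub>G\<^esub> (int 1) = y [^]\<^bsub>G\<^esub> (int (a ^ p))" using y(1) unfolding int_pow_int by simp
  then have "int (G.ord y) dvd int (a ^ p) - int 1" using G.int_pow_eq[OF y(1), of "int 1" "int (a ^ p)"] by blast
  then have h1: "int p ^ m dvd int (a ^ p) - 1" using ordy N_def by simp
  have h2: "\<not> int p ^ m dvd int a - 1"
  proof
    assume "int p ^ m dvd int a - 1"
    then have "int (G.ord y) dvd int a - int 1" using ordy N_def by simp
    then have "y [^]\<^bsub>G\<^esub> (int 1) = y [^]\<^bsub>G\<^esub> (int a)" using G.int_pow_eq[OF y(1), of "int 1" "int a"] by blast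
    then have "y [^]\<^bsub>G\<^esub> (1::nat) = y [^]\<^bsub>G\<^esub> a" by (simp only: int_pow_int)
    then have ya: "y [^]\<^bsub>G\<^esub> a = y" using y(1) by simp
    have "\<forall>x\<in>carrier G. \<sigma> x = x"
    proof
      fix x assume "x \<in> carrier G"
      then obtain k :: nat where k: "x = y [^]\<^bsub>G\<^esub> k" using geny by blast
      have "\<sigma> x = y [^]\<^bsub>G\<^esub> (k * a)" using a k y(1) \<open>x \<in> carrier G\<close> by (simp add: G.nat_pow_pow)
      also have "\<dots> = (y [^]\<^bsub>G\<^esub> a) [^]\<^bsub>G\<^esub> k" using y(1) by (simp add: G.nat_pow_pow mult.commute)
      finally show "\<sigma> x = x" using ya k by simp
    qed
    then have "\<sigma> = \<one>\<^bsub>A\<^esub>" unfolding oA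
      by (intro extensionalityI[OF autoE[OF \<sigma>A]]) auto
    then show False using \<sigma>1 by simp
  qed
  from nt2[OF assms(1,2,3) h1 h2] have m2: "m \<ge> 2"
    and kk: "\<forall>c. \<exists>k. (a ^ k) mod p ^ m = (1 + p ^ (m - 1) * c) mod p ^ m" by auto
  have tau: "\<exists>\<tau>\<in>K. \<forall>x\<in>carrier G. \<tau> x = x [^]\<^bsub>G\<^esub> (1 + e * c)" for c
  proof -
    obtain k where k: "(a ^ k) mod N = (1 + e * c) mod N" using kk N_def e_def by blast
    show ?thesis
    proof (intro bexI ballI)
      show "\<sigma> [^]\<^bsub>A\<^esub> k \<in> K" by (rule subgroup_pow_closed[OF sK \<sigma>K])
      fix x assume x: "x \<in> carrier G"
      have "(\<sigma> [^]\<^bsub>A\<^esub> k) x = x [^]\<^bsub>G\<^esub> (a ^ k)" using \<sigma>pow x by blast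
      also have "\<dots> = x [^]\<^bsub>G\<^esub> ((a ^ k) mod N)" using pow_mod_order[OF assms(4) x] assms(7) N_def by simp
      also have "\<dots> = x [^]\<^bsub>G\<^esub> (1 + e * c)" using k pow_mod_order[OF assms(4) x] assms(7) N_def by simp
      finally show "(\<sigma> [^]\<^bsub>A\<^esub> k) x = x [^]\<^bsub>G\<^esub> (1 + e * c)" .
    qed
  qed
  have key: "z [^]\<^bsub>G\<^esub> e \<otimes>\<^bsub>G\<^esub> b \<in> B" if z: "z \<in> carrier G" and b: "b \<in> B" for z b
  proof -
    obtain \<tau> where \<tau>: "\<tau> \<in> K" "b = \<tau> y" using y b by blast
    have bc: "b \<in> carrier G" using Bc b by blast
    have "\<forall>x\<in>carrier G. \<exists>k::nat. x = (\<tau> y) [^]\<^bsub>G\<^esub> k"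
      using gen_image[OF assms(4) y(1) geny, of \<tau>] \<tau>(1) KA by blast
    then obtain j :: nat where j: "z = b [^]\<^bsub>G\<^esub> j" using z \<tau>(2) by blast
    have "z [^]\<^bsub>G\<^esub> e \<otimes>\<^bsub>G\<^esub> b = b [^]\<^bsub>G\<^esub> (j * e) \<otimes>\<^bsub>G\<^esub> b [^]\<^bsub>G\<^esub> (1::nat)" using j bc by (simp add: G.nat_pow_pow)
    also have "\<dots> = b [^]\<^bsub>G\<^esub> (j * e + 1)" by (rule G.nat_pow_mult[OF bc])
    also have "j * e + 1 = 1 + e * j" by simp
    finally have zb: "z [^]\<^bsub>G\<^esub> e \<otimes>\<^bsub>G\<^esub> b = b [^]\<^bsub>G\<^esub> (1 + e * j)" .
    obtain \<rho> where \<rho>: "\<rho> \<in> K" "\<forall>x\<in>carrier G. \<rho> x = x [^]\<^bsub>G\<^esub> (1 + e * j)" using tau by blast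
    have "z [^]\<^bsub>G\<^esub> e \<otimes>\<^bsub>G\<^esub> b = \<rho> (\<tau> y)" using zb \<rho>(2) bc \<tau>(2) by simp
    have "\<rho> \<otimes>\<^bsub>A\<^esub> \<tau> = compose (carrier G) \<rho> \<tau>"
      using mA[of \<rho> \<tau>] \<rho>(1) \<tau>(1) KA by blast
    then have "(\<rho> \<otimes>\<^bsub>A\<^esub> \<tau>) y = \<rho> (\<tau> y)" using y(1) by (simp add: compose_def)
    moreover have "(\<rho> \<otimes>\<^bsub>A\<^esub> \<tau>) y \<in> B"
      unfolding y(2) using subgroup.m_closed[OF sK \<rho>(1) \<tau>(1)] by (rule imageI)
    ultimately show ?thesis using \<open>z [^]\<^bsub>G\<^esub> e \<otimes>\<^bsub>G\<^esub> b = \<rho> (\<tau> y)\<close> by simp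
  qed
  have sub: "set_pow G e (carrier G) \<subseteq> set_rad G B"
  proof
    fix h assume "h \<in> set_pow G e (carrier G)"
    then obtain z where z: "z \<in> carrier G" "h = z [^]\<^bsub>G\<^esub> e" unfolding set_pow_def by blast
    have hc: "h \<in> carrier G" using z by simp
    have "h <#\<^bsub>G\<^esub> B = B"
    proof
      show "h <#\<^bsub>G\<^esub> B \<subseteq> B"
      proof
        fix x assume "x \<in> h <#\<^bsub>G\<^esub> B"
        then obtain b where "b \<in> B" "x = h \<otimes>\<^bsub>G\<^esub> b" unfolding l_coset_def by blast
        then show "x \<in> B" using key[OF z(1)] z(2) by simp
      qed
      show "B \<subseteq> h <#\<^bsub>G\<^esub> B"
      proof
        fix b assume b: "b \<in> B"
        have bc: "b \<in> carrier G" using Bc b by blast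
        have iz: "inv\<^bsub>G\<^esub> z \<in> carrier G" using z by simp
        have b': "(inv\<^bsub>G\<^esub> z) [^]\<^bsub>G\<^esub> e \<otimes>\<^bsub>G\<^esub> b \<in> B" using key[OF iz b] .
        have "(inv\<^bsub>G\<^esub> z) [^]\<^bsub>G\<^esub> e = inv\<^bsub>G\<^esub> h" using z G.nat_pow_inv by simp
        then have "h \<otimes>\<^bsub>G\<^esub> ((inv\<^bsub>G\<^esub> z) [^]\<^bsub>G\<^esub> e \<otimes>\<^bsub>G\<^esub> b) = b" using hc bc by (simp add: G.m_assoc[symmetric])
        moreover have "h \<otimes>\<^bsub>G\<^esub> ((inv\<^bsub>G\<^esub> z) [^]\<^bsub>G\<^esub> e \<otimes>\<^bsub>G\<^esub> b) \<in> h <#\<^bsub>G\<^esub> B"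
          using b' unfolding l_coset_def by blast
        ultimately show "b \<in> h <#\<^bsub>G\<^esub> B" by simp
      qed
    qed
    then show "h \<in> set_rad G B" using hc unfolding set_rad_def by simp
  qed
  have "y [^]\<^bsub>G\<^esub> e \<in> set_rad G B" using sub y(1) unfolding set_pow_def by blast
  moreover have "y [^]\<^bsub>G\<^esub> e \<noteq> \<one>\<^bsub>G\<^esub>"
  proof
    assume "y [^]\<^bsub>G\<^esub> e = \<one>\<^bsub>G\<^esub>"
    then have "N dvd e" using G.pow_eq_id[OF y(1)] ordy by simp
    then have "N \<le> e" using e_def assms(1) by (simp add: dvd_imp_le prime_gt_0_nat)
    moreover have "e < N" unfolding e_def N_def using assms(3) prime_ge_2_nat[OF assms(1)]
      by (intro power_strict_increasing) auto
    ultimately show False by simp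
  qed
  ultimately have "set_rad G B \<noteq> {\<one>\<^bsub>G\<^esub>}" by blast
  then show "set_pow G (p ^ (m - 1)) (carrier G) \<subseteq> set_rad G B \<and> set_rad G B \<noteq> {\<one>\<^bsub>G\<^esub>}"
    using sub e_def by simp
qed

end
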